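(* Let $(X,d)$ be a complete metric space, let $F:(0,\infty)\to\mathbb{R}$ have a finite right limit $\lim_{s\to t^+}F(s)$ at every point $t>0$, and let $\varphi:(0,\infty)\to(0,\infty)$ satisfy: for every $t>0$ and every sequence $(t_n)\subset(t,\infty)$ with $t_n\to t$, $\limsup_{n\to\infty}\varphi(t_n)>0$. Let $T:X\to X$ be contractive and such that for all $x,y\in X$ with $Tx\neq Ty$, $$\varphi(d(x,y))+F(d(Tx,Ty))\le F(d(x,y)).$$ Then $T$ is a CJMP-contraction.
   Context: $T$ is contractive if $d(Tx,Ty)<d(x,y)$ for all $x\neq y$. $T$ is a CJMP-contraction if it is contractive and for every $\varepsilon>0$ there exists $\delta>0$ such that for all $x,y\in X$, $\varepsilon<d(x,y)<\varepsilon+\delta$ implies $d(Tx,Ty)\le\varepsilon$. *)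

theory Defs
  imports "HOL-Analysis.Analysis"
begin

definition contractive :: "('a::metric_space \<Rightarrow> 'a) \<Rightarrow> bool" where
  "contractive T \<longleftrightarrow> (\<forall>x y. x \<noteq> y \<longrightarrow> dist (T x) (T y) < dist x y)"

definition CJMP_contraction :: "('a::metric_space \<Rightarrow> 'a) \<Rightarrow> bool" where
  "CJMP_contraction T \<longleftrightarrow> contractive T \<and>
     (\<forall>\<epsilon>>0. \<exists>\<delta>>0. \<forall>x y. \<epsilon> < dist x y \<and> dist x y < \<epsilon> + \<delta> \<longrightarrow> dist (T x) (T y) \<le> \<epsilon>)"

end

theory Submission
  imports Defs
begin

theorem mainTheorem6:
  fixes T :: "'a::complete_space \<Rightarrow> 'a"
    and F :: "real \<Rightarrow> real"
    and \<phi> :: "real \<Rightarrow> real"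
  assumes F_right_lim: "\<forall>t>0. \<exists>L. (F \<longlongrightarrow> L) (at_right t)"
    and \<phi>_pos: "\<forall>t>0. \<phi> t > 0"
    and \<phi>_limsup: "\<forall>t>0. \<forall>s::nat \<Rightarrow> real. (\<forall>n. s n > t) \<and> s \<longlonglongrightarrow> t
                      \<longrightarrow> limsup (\<lambda>n. ereal (\<phi> (s n))) > 0"
    and T_contractive: "contractive T"
    and T_ineq: "\<forall>x y. T x \<noteq> T y \<longrightarrow> \<phi> (dist x y) + F (dist (T x) (T y)) \<le> F (dist x y)"
  shows "CJMP_contraction T"
proof (rule ccontr)
  assume "\<not> CJMP_contraction T"
  then obtain e :: real where e: "e > 0" and
    H: "\<forall>d>0. \<exists>x y. e < dist x y \<and> dist x y < e + d \<and> \<not> dist (T x) (T y) \<le> e"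
    using T_contractive unfolding CJMP_contraction_def by blast
  have "\<forall>n::nat. \<exists>p. e < dist (fst p) (snd p) \<and> dist (fst p) (snd p) < e + 1/(real n+1)
          \<and> e < dist (T (fst p)) (T (snd p))"
  proof
    fix n :: nat
    obtain x y where "e < dist x y \<and> dist x y < e + 1/(real n+1) \<and> \<not> dist (T x) (T y) \<le> e"
      using H[rule_format, of "1/(real n+1)"] by auto
    then show "\<exists>p. e < dist (fst p) (snd p) \<and> dist (fst p) (snd p) < e + 1/(real n+1)
          \<and> e < dist (T (fst p)) (T (snd p))" by (intro exI[of _ "(x,y)"]) auto
  qed
  then obtain p where p: "\<And>n. e < dist (fst (p n)) (snd (p n)) \<and> dist (fst (p n)) (snd (p n)) < e + 1/(real n+1)
          \<and> e < dist (T (fst (p n))) (T (snd (p n)))"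
    by metis
  define s where "s n = dist (fst (p n)) (snd (p n))" for n
  define r where "r n = dist (T (fst (p n))) (T (snd (p n)))" for n
  have rs: "r n < s n" for n
  proof -
    have "fst (p n) \<noteq> snd (p n)" using p[of n] e by auto
    then show ?thesis unfolding r_def s_def
      by (rule T_contractive[unfolded contractive_def, rule_format])
  qed
  have s1: "e < s n" "s n < e + 1/(real n+1)" for n using p[of n] s_def by auto
  have r1: "e < r n" "r n < e + 1/(real n+1)" for n using p[of n] r_def rs[of n] s1[of n] by auto
  have zeq: "(\<lambda>n. 1/(real n+1)) = (\<lambda>n. inverse (real (Suc n)))" by (simp add: inverse_eq_divide add.commute)
  have z: "(\<lambda>n. 1/(real n+1)) \<longlonglongrightarrow> 0" unfolding zeq by (rule LIMSEQ_inverse_real_of_nat)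
  have sl: "s \<longlonglongrightarrow> e"
  proof -
    have h: "(\<lambda>n. e + 1/(real n+1)) \<longlonglongrightarrow> e" using tendsto_add[OF tendsto_const z, of e] by simp
    have l: "\<forall>n. e \<le> s n" using s1(1) less_imp_le by blast
    have u: "\<forall>n. s n \<le> e + 1/(real n+1)" using s1(2) less_imp_le by blast
    show ?thesis by (rule real_tendsto_sandwich[OF always_eventually[OF l] always_eventually[OF u] tendsto_const h])
  qed
  have rl: "r \<longlonglongrightarrow> e"
  proof -
    have h: "(\<lambda>n. e + 1/(real n+1)) \<longlonglongrightarrow> e" using tendsto_add[OF tendsto_const z, of e] by simp
    have l: "\<forall>n. e \<le> r n" using r1(1) less_imp_le by blast
    have u: "\<forall>n. r n \<le> e + 1/(real n+1)" using r1(2) less_imp_le by blast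
    show ?thesis by (rule real_tendsto_sandwich[OF always_eventually[OF l] always_eventually[OF u] tendsto_const h])
  qed
  obtain L where L: "(F \<longlongrightarrow> L) (at_right e)" using F_right_lim e by blast
  have sf: "filterlim s (at_right e) sequentially"
    using sl s1 by (auto simp: filterlim_at less_imp_neq[symmetric] intro!: always_eventually)
  have rf: "filterlim r (at_right e) sequentially"
    using rl r1 by (auto simp: filterlim_at less_imp_neq[symmetric] intro!: always_eventually)
  have Fs: "(\<lambda>n. F (s n)) \<longlonglongrightarrow> L" using filterlim_compose[OF L sf] .
  have Fr: "(\<lambda>n. F (r n)) \<longlonglongrightarrow> L" using filterlim_compose[OF L rf] .
  have D: "(\<lambda>n. ereal (F (s n) - F (r n))) \<longlonglongrightarrow> ereal 0"
    using tendsto_diff[OF Fs Fr] by (simp add: lim_ereal)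
  have le: "\<phi> (s n) \<le> F (s n) - F (r n)" for n
  proof -
    have "T (fst (p n)) \<noteq> T (snd (p n))" using r1[of n] e r_def by auto
    then have "\<phi> (s n) + F (r n) \<le> F (s n)" unfolding s_def r_def by (rule T_ineq[rule_format])
    then show ?thesis by linarith
  qed
  have "limsup (\<lambda>n. ereal (\<phi> (s n))) \<le> limsup (\<lambda>n. ereal (F (s n) - F (r n)))"
    by (rule Limsup_mono) (simp add: le)
  also have "\<dots> = 0" using lim_imp_Limsup[OF _ D] by (simp add: zero_ereal_def)
  finally have "limsup (\<lambda>n. ereal (\<phi> (s n))) \<le> 0" .
  moreover have "limsup (\<lambda>n. ereal (\<phi> (s n))) > 0"
  proof -
    have A: "(\<forall>n. s n > e) \<and> s \<longlonglongrightarrow> e" using s1 sl by auto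
    have B: "\<forall>s::nat \<Rightarrow> real. (\<forall>n. s n > e) \<and> s \<longlonglongrightarrow> e
                      \<longrightarrow> limsup (\<lambda>n. ereal (\<phi> (s n))) > 0" using mp[OF spec[OF \<phi>_limsup, of e] e] .
    show ?thesis using spec[OF B, of s] A by (rule mp)
  qed
  ultimately show False by simp
qed

end
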